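(* Let $S_n$ be as defined in the context. For every $n\in\mathbb{N}$, $n\ge 1$, and every $w\in\{0,1\}^n$, $\mathrm{occ}_b(w,S_n)=1$; that is, $S_n$, split into consecutive blocks of length $n$, contains every binary string of length $n$ exactly once.
   Context: Strings are indexed from $0$; $x[i..j]$ is the substring from position $i$ to $j$; $x^j$ is $j$-fold concatenation. For a string $x$ and $w$ nonempty, $\mathrm{occ}_b(w,x)=|\{i: x[i..i+|w|-1]=w,\ i\equiv 0 \bmod |w|\}|$. de Bruijn strings: for $n\ge1$, a de Bruijn string of order $n$ is a binary string $x$ of length $2^n$ such that every $w\in\{0,1\}^n$ occurs exactly once as a substring of $x\cdot x[0..n-2]$. $db(n)$ is the lexicographically least one, produced by Martin's algorithm: start with $x=1^{n-1}$; while possible, append a bit (preferring $0$ over $1$) so that all length-$n$ substrings of $x$ remain distinct; then delete the prefix $1^{n-1}$. For $0\le i<2^n$, $db_i(n)=db(n)[i..2^n-1]\cdot db(n)[0..i-1]$. For $n\ge1$ write $n=2^st$ with $s\ge0$ and $t$ odd, let $B_{n,i}=db_i(n)^t$ for $0\le i<2^s$, and $S_n=B_{n,0}B_{n,1}\cdots B_{n,2^s-1}$. *)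

theory Defs
  imports "HOL-Library.While_Combinator" "HOL-Computational_Algebra.Primes"
begin

text \<open>Binary strings are lists of booleans: False encodes 0, True encodes 1.
  Strings are indexed from 0.\<close>

definition occ_b :: "bool list \<Rightarrow> bool list \<Rightarrow> nat" where
  "occ_b w x = card {i. i + length w \<le> length x \<and> take (length w) (drop i x) = w
                         \<and> i mod length w = 0}"

definition substrs :: "nat \<Rightarrow> bool list \<Rightarrow> bool list list" where
  "substrs n x = map (\<lambda>i. take n (drop i x)) [0..<Suc (length x) - n]"

definition ok :: "nat \<Rightarrow> bool list \<Rightarrow> bool" where
  "ok n x \<longleftrightarrow> distinct (substrs n x)"

definition martin :: "nat \<Rightarrow> bool list" where
  "martin n = the (while_option
      (\<lambda>x. ok n (x @ [False]) \<or> ok n (x @ [True]))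
      (\<lambda>x. if ok n (x @ [False]) then x @ [False] else x @ [True])
      (replicate (n - 1) True))"

definition db :: "nat \<Rightarrow> bool list" where
  "db n = drop (n - 1) (martin n)"

definition db_rot :: "nat \<Rightarrow> nat \<Rightarrow> bool list" where
  "db_rot n i = drop i (db n) @ take i (db n)"

definition S :: "nat \<Rightarrow> bool list" where
  "S n = (let s = multiplicity (2::nat) n; t = n div 2 ^ s in
          concat (map (\<lambda>i. concat (replicate t (db_rot n i))) [0..<2 ^ s]))"

end

theory Submission
  imports Defs "HOL-Number_Theory.Cong"
begin


lemma substrs_mem:
  assumes "n \<ge> 1"
  shows "w \<in> set (substrs n x) \<longleftrightarrow> (\<exists>p. p + n \<le> length x \<and> take n (drop p x) = w)"
  using assms unfolding substrs_def by (auto, force)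

lemma substrs_len: "length (substrs n x) = Suc (length x) - n"
  by (simp add: substrs_def)

lemma substrs_snoc:
  assumes "n \<ge> 1" "length x \<ge> n - 1"
  shows "substrs n (x @ [b]) = substrs n x @ [drop (length x - (n - 1)) x @ [b]]"
proof -
  have u: "[0..<Suc (length (x@[b])) - n] = [0..<Suc (length x) - n] @ [Suc (length x) - n]"
    using assms by (simp add: Suc_diff_le)
  have "take n (drop i (x @ [b])) = take n (drop i x)" if "i < Suc (length x) - n" for i
    using that assms by simp
  moreover have "take n (drop (Suc (length x) - n) (x @ [b])) = drop (length x - (n - 1)) x @ [b]"
    using assms by (simp add: Suc_diff_le)
  ultimately show ?thesis unfolding substrs_def u by simp
qed

lemma ok_distinct_pos:
  assumes "ok n x" "n \<ge> 1" "p + n \<le> length x" "q + n \<le> length x"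
    "take n (drop p x) = take n (drop q x)"
  shows "p = q"
proof -
  have "distinct (substrs n x)" using assms(1) by (simp add: ok_def)
  moreover have "p < Suc (length x) - n" "q < Suc (length x) - n" using assms by auto
  moreover have "substrs n x ! p = take n (drop p x)" "substrs n x ! q = take n (drop q x)"
    using calculation(2,3) by (simp_all add: substrs_def)
  moreover have "p < length (substrs n x)" "q < length (substrs n x)"
    using assms by (simp_all add: substrs_len)
  ultimately show ?thesis using assms(5) by (metis nth_eq_iff_index_eq)
qed

lemma card_words: "card {w :: bool list. length w = n} = 2 ^ n"
  using card_lists_length_eq[of "UNIV :: bool set" n] by simp

lemma finite_words: "finite {w :: bool list. length w = n}"
  using finite_lists_length_eq[of "UNIV :: bool set" n] by simp

lemma substrs_sub: "set (substrs n x) \<subseteq> {w. length w = n}"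
  unfolding substrs_def by auto

lemma ok_len:
  assumes "ok n x"
  shows "Suc (length x) - n \<le> 2 ^ n"
proof -
  have "length (substrs n x) = card (set (substrs n x))"
    using assms by (simp add: ok_def distinct_card)
  also have "\<dots> \<le> 2 ^ n" using card_mono[OF finite_words substrs_sub] card_words by metis
  finally show ?thesis by (simp add: substrs_len)
qed

definition Inv :: "nat \<Rightarrow> bool list \<Rightarrow> bool" where
  "Inv n x \<longleftrightarrow> length x \<ge> n - 1 \<and> take (n - 1) x = replicate (n - 1) True \<and> ok n x \<and>
     (\<forall>y. y @ [True] \<in> set (substrs n x) \<longrightarrow> y @ [False] \<in> set (substrs n x))"

lemma Inv_init: "n \<ge> 1 \<Longrightarrow> Inv n (replicate (n - 1) True)"
  by (simp add: Inv_def ok_def substrs_def)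

lemma Inv_step:
  assumes "n \<ge> 1" "Inv n x" "ok n (x @ [False]) \<or> ok n (x @ [True])"
  shows "Inv n (if ok n (x @ [False]) then x @ [False] else x @ [True])"
proof (cases "ok n (x @ [False])")
  case True
  then show ?thesis using assms by (auto simp: Inv_def substrs_snoc)
next
  case False
  have d: "distinct (substrs n x)" using assms by (simp add: Inv_def ok_def)
  have "drop (length x - (n - 1)) x @ [False] \<in> set (substrs n x)"
    using False d assms by (simp add: Inv_def ok_def substrs_snoc)
  then show ?thesis using False assms by (auto simp: Inv_def substrs_snoc)
qed

lemma martin_props:
  assumes "n \<ge> 1"
  shows "Inv n (martin n) \<and> \<not> (ok n (martin n @ [False]) \<or> ok n (martin n @ [True]))"
proof -
  let ?b = "\<lambda>x. ok n (x @ [False]) \<or> ok n (x @ [True])"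
  let ?c = "\<lambda>x. if ok n (x @ [False]) then x @ [False] else x @ [True]"
  have "\<exists>t. while_option ?b ?c (replicate (n - 1) True) = Some t"
  proof (rule measure_while_option_Some[where P="Inv n" and f="\<lambda>x. 2 ^ n + n - length x"])
    fix s assume "Inv n s" "?b s"
    moreover have "ok n (?c s)" using \<open>?b s\<close> by auto
    ultimately show "Inv n (?c s) \<and> 2 ^ n + n - length (?c s) < 2 ^ n + n - length s"
      using Inv_step[OF assms] ok_len[of n "?c s"] by (auto split: if_splits)
  qed (rule Inv_init[OF assms])
  then obtain t where t: "while_option ?b ?c (replicate (n - 1) True) = Some t" by blast
  have "Inv n t" by (rule while_option_rule[OF _ t]) (use Inv_step[OF assms] Inv_init[OF assms] in auto)
  moreover have "\<not> ?b t" using while_option_stop[OF t] .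
  moreover have "martin n = t" using t by (simp add: martin_def)
  ultimately show ?thesis by simp
qed



context
  fixes n :: nat and x :: "bool list"
  assumes n1: "n \<ge> 1" and inv: "Inv n x" and stop: "\<not> ok n (x @ [False])" "\<not> ok n (x @ [True])"
begin

abbreviation "WW \<equiv> set (substrs n x)"
abbreviation "ee \<equiv> length x - (n - 1)"

lemma lenx: "length x \<ge> n - 1" using inv by (simp add: Inv_def)
lemma okx: "ok n x" using inv by (simp add: Inv_def)
lemma pref: "take (n - 1) x = replicate (n - 1) True" using inv by (simp add: Inv_def)
lemma greedy: "y @ [True] \<in> WW \<Longrightarrow> y @ [False] \<in> WW" using inv by (simp add: Inv_def)

lemma final_in: "drop ee x @ [b] \<in> WW"
proof -
  have d: "distinct (substrs n x)" using okx by (simp add: ok_def)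
  show ?thesis using stop d n1 lenx by (cases b) (auto simp: ok_def substrs_snoc)
qed

lemma occ_pred:
  assumes "1 \<le> q" "q + (n - 1) \<le> length x" "take (n - 1) (drop q x) = z"
  shows "take n (drop (q - 1) x) = x ! (q - 1) # z" "(q - 1) + n \<le> length x"
proof -
  have "q - 1 < length x" using assms n1 by linarith
  then have "drop (q - 1) x = x ! (q - 1) # drop q x" using assms(1)
    by (metis Cons_nth_drop_Suc Suc_diff_1 less_le_trans zero_less_one)
  moreover have "n = Suc (n - 1)" using n1 by simp
  ultimately show "take n (drop (q - 1) x) = x ! (q - 1) # z" using assms(3)
    by (metis take_Suc_Cons)
  show "(q - 1) + n \<le> length x" using assms n1 by linarith
qed

lemma occ_distinct:
  assumes "1 \<le> q" "q + (n - 1) \<le> length x" "take (n - 1) (drop q x) = z"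
    "1 \<le> q'" "q' + (n - 1) \<le> length x" "take (n - 1) (drop q' x) = z" "q \<noteq> q'"
  shows "x ! (q - 1) \<noteq> x ! (q' - 1)"
proof
  assume "x ! (q - 1) = x ! (q' - 1)"
  then have "take n (drop (q - 1) x) = take n (drop (q' - 1) x)"
    using occ_pred[OF assms(1-3)] occ_pred[OF assms(4-6)] by simp
  then have "q - 1 = q' - 1"
    using ok_distinct_pos[OF okx n1] occ_pred(2)[OF assms(1-3)] occ_pred(2)[OF assms(4-6)] by blast
  then show False using assms by linarith
qed

lemma pos_of_mem:
  assumes "z @ [b] \<in> WW" "length z = n - 1"
  obtains p where "p + n \<le> length x" "take (n - 1) (drop p x) = z" "p < ee" "take n (drop p x) = z @ [b]"
proof -
  obtain p where p: "p + n \<le> length x" "take n (drop p x) = z @ [b]"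
    using assms substrs_mem[OF n1] by blast
  have "take (n - 1) (drop p x) = take (n - 1) (take n (drop p x))" by (simp add: min_def)
  also have "\<dots> = z" using p(2) assms(2) by simp
  finally have "take (n - 1) (drop p x) = z" .
  moreover have "p < ee" using p n1 by linarith
  ultimately show ?thesis using that p by blast
qed

lemma pos0: "take (n - 1) (drop 0 x) = z \<Longrightarrow> z = replicate (n - 1) True"
  using pref by simp

lemma lenu: "length (drop ee x) = n - 1" using lenx by simp

lemma three_false:
  assumes "1 \<le> q1" "q1 + (n - 1) \<le> length x" "take (n - 1) (drop q1 x) = z"
    "1 \<le> q2" "q2 + (n - 1) \<le> length x" "take (n - 1) (drop q2 x) = z"
    "1 \<le> q3" "q3 + (n - 1) \<le> length x" "take (n - 1) (drop q3 x) = z"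
    "q1 \<noteq> q2" "q1 \<noteq> q3" "q2 \<noteq> q3"
  shows False
  using occ_distinct[OF assms(1-6) assms(10)] occ_distinct[OF assms(1-3) assms(7-9) assms(11)]
    occ_distinct[OF assms(4-9) assms(12)] by auto

lemma final_ones: "drop ee x = replicate (n - 1) True"
proof (rule ccontr)
  assume ne: "drop ee x \<noteq> replicate (n - 1) True"
  obtain p0 where p0: "p0 + n \<le> length x" "take (n - 1) (drop p0 x) = drop ee x" "p0 < ee" "take n (drop p0 x) = drop ee x @ [False]"
    using pos_of_mem[OF final_in[of False] lenu] by blast
  obtain p1 where p1: "p1 + n \<le> length x" "take (n - 1) (drop p1 x) = drop ee x" "p1 < ee" "take n (drop p1 x) = drop ee x @ [True]"
    using pos_of_mem[OF final_in[of True] lenu] by blast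
  have "p0 \<noteq> p1" using p0(4) p1(4) by auto
  have "p0 \<noteq> 0" using pos0 p0(2) ne by metis
  have "p1 \<noteq> 0" using pos0 p1(2) ne by metis
  have "take (n - 1) (drop ee x) = drop ee x" using lenu by simp
  then show False using three_false[of p0 "drop ee x" p1 ee] p0 p1 \<open>p0 \<noteq> p1\<close> \<open>p0 \<noteq> 0\<close> \<open>p1 \<noteq> 0\<close> n1 lenx
    by linarith
qed


lemma two_occ:
  assumes "1 \<le> q" "q + (n - 1) \<le> length x" "take (n - 1) (drop q x) = z"
    "1 \<le> q'" "q' + (n - 1) \<le> length x" "take (n - 1) (drop q' x) = z" "q \<noteq> q'"
  shows "a # z \<in> WW"
proof -
  have "x ! (q - 1) \<noteq> x ! (q' - 1)" by (rule occ_distinct[OF assms])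
  then have "a = x ! (q - 1) \<or> a = x ! (q' - 1)" by blast
  moreover have "x ! (q - 1) # z \<in> WW"
    unfolding substrs_mem[OF n1] using occ_pred[OF assms(1-3)] by blast
  moreover have "x ! (q' - 1) # z \<in> WW"
    unfolding substrs_mem[OF n1] using occ_pred[OF assms(4-6)] by blast
  ultimately show ?thesis by blast
qed

lemma full_in:
  assumes "length z = n - 1" "z @ [False] \<in> WW" "z @ [True] \<in> WW"
  shows "a # z \<in> WW"
proof -
  obtain p0 where p0: "p0 + n \<le> length x" "take (n - 1) (drop p0 x) = z" "p0 < ee" "take n (drop p0 x) = z @ [False]"
    using pos_of_mem[OF assms(2,1)] by blast
  obtain p1 where p1: "p1 + n \<le> length x" "take (n - 1) (drop p1 x) = z" "p1 < ee" "take n (drop p1 x) = z @ [True]"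
    using pos_of_mem[OF assms(3,1)] by blast
  have ne: "p0 \<noteq> p1" using p0(4) p1(4) by auto
  have e: "take (n - 1) (drop ee x) = drop ee x" using lenu by simp
  show ?thesis
  proof (cases "p0 = 0 \<or> p1 = 0")
    case False
    then show ?thesis using two_occ[of p0 z p1] p0 p1 ne n1 by auto
  next
    case True
    then have "z = drop ee x" using pos0 p0(2) p1(2) final_ones by metis
    then show ?thesis using True two_occ[of p0 z ee] two_occ[of p1 z ee] p0 p1 ne n1 e lenx by auto
  qed
qed

lemma not_full_step:
  assumes "length v = n - 1" "v \<noteq> []" "\<not> (v @ [False] \<in> WW \<and> v @ [True] \<in> WW)"
  shows "\<not> (tl v @ [True] @ [False] \<in> WW \<and> tl v @ [True] @ [True] \<in> WW)"
proof
  assume h: "tl v @ [True] @ [False] \<in> WW \<and> tl v @ [True] @ [True] \<in> WW"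
  have "v @ [True] \<notin> WW" using assms(3) greedy by blast
  have l: "length (tl v @ [True]) = n - 1" using assms(1,2) by (cases v) auto
  have m: "hd v # (tl v @ [True]) \<in> WW"
    using full_in[OF l, of "hd v"] h by simp
  have eqv: "v @ [True] = hd v # (tl v @ [True])" using assms(2) by simp
  have "v @ [True] \<in> WW" unfolding eqv by (rule m)
  then show False using \<open>v @ [True] \<notin> WW\<close> by contradiction
qed

lemma all_full:
  assumes "length y = n - 1"
  shows "y @ [False] \<in> WW \<and> y @ [True] \<in> WW"
proof (rule ccontr)
  assume nf: "\<not> ?thesis"
  have "k \<le> n - 1 \<Longrightarrow> \<not> ((drop k y @ replicate k True) @ [False] \<in> WW \<and> (drop k y @ replicate k True) @ [True] \<in> WW)" for k
  proof (induction k)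
    case 0
    then show ?case using nf by simp
  next
    case (Suc k)
    let ?v = "drop k y @ replicate k True"
    have lv: "length ?v = n - 1" using assms Suc by simp
    have "?v \<noteq> []" using Suc assms by simp
    have "tl ?v = drop (Suc k) y @ replicate k True" using Suc assms
      by (simp add: drop_Suc tl_drop)
    then have eq: "tl ?v @ [True] = drop (Suc k) y @ replicate (Suc k) True"
      by (simp add: replicate_append_same)
    have ih: "\<not>(?v @ [False] \<in> WW \<and> ?v @ [True] \<in> WW)" using Suc by simp
    have "\<not> ((tl ?v @ [True]) @ [False] \<in> WW \<and> (tl ?v @ [True]) @ [True] \<in> WW)"
      using not_full_step[OF lv \<open>?v \<noteq> []\<close> ih] by simp
    then show ?case unfolding eq .
  qed
  from this[of "n - 1"] show False
    using assms final_in final_ones by simp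
qed

lemma all_words: "length w = n \<Longrightarrow> w \<in> WW"
proof -
  assume "length w = n"
  moreover then have "w \<noteq> []" using n1 by auto
  ultimately have "length (butlast w) = n - 1" by auto
  then have "butlast w @ [last w] \<in> WW" using all_full[of "butlast w"] by (cases "last w") auto
  then show ?thesis using \<open>w \<noteq> []\<close> by simp
qed

lemma WW_eq: "WW = {w. length w = n}"
  using all_words substrs_sub by blast

lemma length_x: "length x = 2 ^ n + (n - 1)"
proof -
  have "length (substrs n x) = card WW" using okx by (simp add: ok_def distinct_card)
  then have "Suc (length x) - n = 2 ^ n" using WW_eq card_words substrs_len by metis
  moreover have "2 ^ n > (0::nat)" by simp
  ultimately show ?thesis using n1 by linarith
qed

end


definition cw :: "nat \<Rightarrow> nat \<Rightarrow> bool list" where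
  "cw n p = map (\<lambda>r. db n ! ((p + r) mod 2 ^ n)) [0..<n]"

lemma db_facts:
  assumes n1: "n \<ge> 1"
  shows "length (db n) = 2 ^ n" "length w = n \<Longrightarrow> \<exists>p<2 ^ n. cw n p = w"
proof -
  define x where "x = martin n"
  define N where "N = (2::nat) ^ n"
  have P: "Inv n x" "\<not> ok n (x @ [False])" "\<not> ok n (x @ [True])"
    using martin_props[OF n1] unfolding x_def by auto
  have lx: "length x = N + (n - 1)" using length_x[OF n1 P] N_def by simp
  have tk: "take (n - 1) x = replicate (n - 1) True" using pref[OF n1 P] .
  have dr: "drop N x = replicate (n - 1) True" using final_ones[OF n1 P] lx by simp
  have dd: "db n = drop (n - 1) x" by (simp add: db_def x_def)
  show ld: "length (db n) = 2 ^ n" using dd lx N_def by simp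
  have nN: "n \<le> N" unfolding N_def by (simp add: less_imp_le_nat)
  have dnth: "db n ! j = x ! (j + (n - 1))" if "j < N" for j
    using that dd lx by (simp add: add.commute)
  have xhi: "x ! (N + i) = True" if "i < n - 1" for i
  proof -
    have "x ! (N + i) = drop N x ! i" using that lx by simp
    then show ?thesis using dr that by simp
  qed
  assume lw: "length w = n"
  have "w \<in> set (substrs n x)" using all_words[OF n1 P lw] .
  then obtain q where q: "q + n \<le> length x" "take n (drop q x) = w"
    using substrs_mem[OF n1] by blast
  define p where "p = (q + N - (n - 1)) mod N"
  have "p < N" unfolding p_def N_def by simp
  moreover have "cw n p = w"
  proof (rule nth_equalityI)
    show "length (cw n p) = length w" using lw by (simp add: cw_def)
    fix r assume "r < length (cw n p)"
    then have r: "r < n" by (simp add: cw_def)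
    have wr: "w ! r = x ! (q + r)" using q r by auto
    have m: "(p + r) mod N = (q + N - (n - 1) + r) mod N"
      unfolding p_def by (simp add: mod_add_left_eq)
    have "db n ! ((p + r) mod N) = x ! (q + r)"
    proof (cases "q + r < n - 1")
      case True
      then have "(p + r) mod N = q + r + N - (n - 1)" using m nN lx q by simp
      then have "db n ! ((p + r) mod N) = x ! (N + (q + r))"
        using dnth[of "q + r + N - (n - 1)"] True nN by (simp add: add.commute)
      also have "\<dots> = True" using xhi True by simp
      also have "x ! (q + r) = True" using tk True
        by (metis nth_replicate nth_take)
      ultimately show ?thesis by simp
    next
      case False
      have "q + N - (n - 1) + r = (q + r - (n - 1)) + N" using False nN by simp
      moreover have "q + r - (n - 1) < N" using q lx r by linarith
      ultimately have "(p + r) mod N = q + r - (n - 1)" using m by simp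
      then show ?thesis using dnth[of "q + r - (n - 1)"] \<open>q + r - (n - 1) < N\<close> False by simp
    qed
    then show "cw n p ! r = w ! r" using wr r by (simp add: cw_def N_def)
  qed
  ultimately show "\<exists>p<2 ^ n. cw n p = w" unfolding N_def by blast
qed



lemma concat_uniform:
  assumes "\<forall>i<m. length (g i) = K"
  shows "length (concat (map g [0..<m])) = m * K \<and>
         (\<forall>k < m * K. concat (map g [0..<m]) ! k = g (k div K) ! (k mod K))"
  using assms
proof (induction m)
  case 0
  then show ?case by simp
next
  case (Suc m)
  then have IH: "length (concat (map g [0..<m])) = m * K"
      "\<And>k. k < m * K \<Longrightarrow> concat (map g [0..<m]) ! k = g (k div K) ! (k mod K)"
    by auto
  have lg: "length (g m) = K" using Suc.prems by simp
  have "concat (map g [0..<Suc m]) ! k = g (k div K) ! (k mod K)" if k: "k < Suc m * K" for k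
  proof (cases "k < m * K")
    case True
    then show ?thesis using IH by (simp add: nth_append)
  next
    case False
    then obtain i where i: "k = m * K + i" "i < K" using k
      by (metis add.commute add_diff_inverse_nat mult_Suc nat_add_left_cancel_less)
    then have "k div K = m" "k mod K = i" by auto
    then show ?thesis using IH False i by (simp add: nth_append)
  qed
  then show ?case using IH lg by simp
qed

lemma concat_replicate_nth:
  assumes "k < t * length l"
  shows "concat (replicate t l) ! k = l ! (k mod length l)"
proof -
  have "replicate t l = map (\<lambda>_. l) [0..<t]" by (simp add: map_replicate_const)
  then show ?thesis using concat_uniform[of t "\<lambda>_. l" "length l"] assms by simp
qed

lemma concat_replicate_length: "length (concat (replicate t l)) = t * length l"
  by (induction t) auto

lemma db_rot_nth:
  assumes "n \<ge> 1" "i < 2 ^ n" "m < 2 ^ n"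
  shows "db_rot n i ! m = db n ! ((i + m) mod 2 ^ n)"
proof -
  have l: "length (db n) = 2 ^ n" using db_facts(1)[OF assms(1)] .
  show ?thesis
  proof (cases "m < 2 ^ n - i")
    case True
    then show ?thesis using l assms by (simp add: db_rot_def nth_append)
  next
    case False
    have e: "i + m = (m - (2 ^ n - i)) + 2 ^ n" using assms False by simp
    have "m - (2 ^ n - i) < 2 ^ n" using assms by simp
    then have "(i + m) mod 2 ^ n = m - (2 ^ n - i)" unfolding e by simp
    then show ?thesis using l assms False by (simp add: db_rot_def nth_append)
  qed
qed

lemma db_rot_length: "n \<ge> 1 \<Longrightarrow> i < 2 ^ n \<Longrightarrow> length (db_rot n i) = 2 ^ n"
  using db_facts(1) by (simp add: db_rot_def)



lemma mult_facts:
  assumes n1: "(n::nat) \<ge> 1"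
  defines "s \<equiv> multiplicity (2::nat) n"
  defines "t \<equiv> n div 2 ^ s"
  shows "n = 2 ^ s * t" "odd t" "s < n"
proof -
  have d: "2 ^ s dvd n" unfolding s_def by (rule multiplicity_dvd)
  then show nt: "n = 2 ^ s * t" unfolding t_def by simp
  show "odd t"
  proof
    assume "even t"
    then have "2 ^ Suc s dvd n" using nt by auto
    then have "Suc s \<le> s" unfolding s_def using n1
      by (intro multiplicity_geI) auto
    then show False by simp
  qed
  have "2 ^ s \<le> n" using d n1 by (simp add: dvd_imp_le)
  also have "n < 2 ^ n" by (rule less_exp)
  finally show "s < n" by (simp add: power_less_imp_less_exp)
qed

theorem lemma1:
  fixes n :: nat and w :: "bool list"
  assumes "n \<ge> 1" and "length w = n"
  shows "occ_b w (S n) = 1"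
proof -
  note n1 = assms(1) and lw = assms(2)
  define s where "s = multiplicity (2::nat) n"
  define t where "t = n div 2 ^ s"
  define N where "N = (2::nat) ^ n"
  define M where "M = (2::nat) ^ (n - s)"
  have nt: "n = 2 ^ s * t" and ot: "odd t" and sn: "s < n"
    using mult_facts[OF n1] unfolding s_def t_def by auto
  have NM: "N = 2 ^ s * M" unfolding N_def M_def using sn by (simp flip: power_add)
  have tN: "t * N = n * M" using nt NM by simp
  have Npos: "N > 0" "M > 0" "t > 0" using ot by (auto simp: N_def M_def intro!: odd_pos)
  have sN: "2 ^ s < N" unfolding N_def by (rule power_strict_increasing[OF sn]) simp
  have ld: "length (db n) = N" using db_facts(1)[OF n1] N_def by simp
  define B where "B i = concat (replicate t (db_rot n i))" for i
  have SB: "S n = concat (map B [0..<2 ^ s])"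
    unfolding S_def B_def s_def t_def Let_def by simp
  have lB: "\<forall>i<2 ^ s. length (B i) = t * N"
  proof (intro allI impI)
    fix i :: nat assume "i < 2 ^ s"
    then have "i < 2 ^ n" using less_trans[OF _ sN] N_def by blast
    then show "length (B i) = t * N"
      using db_rot_length[OF n1] unfolding B_def N_def by (simp add: concat_replicate_length)
  qed
  have lS: "length (S n) = n * N"
    using concat_uniform[OF lB] SB nt NM by simp
  have Snth: "S n ! k = db n ! ((k div (t * N) + k) mod N)" if k: "k < n * N" for k
  proof -
    have k2: "k < 2 ^ s * (t * N)" using k nt by (simp add: mult.assoc)
    then have "S n ! k = B (k div (t * N)) ! (k mod (t * N))"
      using concat_uniform[OF lB] SB by simp
    also have "\<dots> = db_rot n (k div (t * N)) ! (k mod (t * N) mod N)"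
    proof -
      have kd: "k div (t * N) < 2 ^ n" using k2 sN N_def
        by (metis less_mult_imp_div_less mult.commute order.strict_trans)
      have lr: "length (db_rot n (k div (t * N))) = N" using db_rot_length[OF n1 kd] N_def by simp
      have "k mod (t * N) < t * N" using Npos by simp
      then show ?thesis unfolding B_def using concat_replicate_nth[of "k mod (t * N)" t "db_rot n (k div (t * N))"] lr by simp
    qed
    also have "\<dots> = db n ! ((k div (t * N) + k mod (t * N) mod N) mod N)"
    proof -
      have "k div (t * N) < 2 ^ n" using k2 sN N_def
        by (metis less_mult_imp_div_less mult.commute order.strict_trans)
      then show ?thesis using db_rot_nth[OF n1] Npos N_def by simp
    qed
    also have "k mod (t * N) mod N = k mod N" by (simp add: mod_mod_cancel)
    finally show ?thesis by (simp add: mod_add_right_eq)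
  qed
  define \<sigma> where "\<sigma> j = (j div M + j * n) mod N" for j
  have blk: "take n (drop (j * n) (S n)) = cw n (\<sigma> j)" if j: "j < N" for j
  proof (rule nth_equalityI)
    have jn: "j * n + n \<le> n * N" using j
      by (metis Suc_leI add.commute mult.commute mult_Suc_right mult_le_mono2)
    show "length (take n (drop (j * n) (S n))) = length (cw n (\<sigma> j))"
      using jn lS by (simp add: cw_def)
    fix r assume "r < length (take n (drop (j * n) (S n)))"
    then have r: "r < n" by simp
    have "j * n \<le> length (S n)" using jn lS by linarith
    then have "take n (drop (j * n) (S n)) ! r = S n ! (j * n + r)" using r by simp
    also have "\<dots> = db n ! (((j * n + r) div (t * N) + (j * n + r)) mod N)"
      using Snth jn r by simp
    also have "(j * n + r) div (t * N) = j div M"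
    proof -
      have "(j * n + r) div n = j" using r by simp
      then show ?thesis using tN by (simp add: div_mult2_eq)
    qed
    also have "(j div M + (j * n + r)) mod N = (\<sigma> j + r) mod N"
      unfolding \<sigma>_def by (simp add: mod_add_left_eq add.assoc)
    finally show "take n (drop (j * n) (S n)) ! r = cw n (\<sigma> j) ! r"
      using r by (simp add: cw_def N_def)
  qed
  have \<sigma>inj: "inj_on \<sigma> {..<N}"
  proof
    fix j j' assume j: "j \<in> {..<N}" and j': "j' \<in> {..<N}" and e: "\<sigma> j = \<sigma> j'"
    have a: "j div M < 2 ^ s" "j' div M < 2 ^ s" using j j' NM
      by (auto simp: less_mult_imp_div_less mult.commute)
    have dv: "2 ^ s dvd N" using NM by simp
    have "\<sigma> j mod 2 ^ s = j div M"
    proof -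
      have "\<sigma> j mod 2 ^ s = (j div M + j * n) mod 2 ^ s"
        unfolding \<sigma>_def using dv by (simp add: mod_mod_cancel)
      also have "j * n = (j * t) * 2 ^ s" using nt by simp
      also have "(j div M + (j * t) * 2 ^ s) mod 2 ^ s = (j div M) mod 2 ^ s" by (rule mod_mult_self1)
      also have "\<dots> = j div M" using a by simp
      finally show ?thesis .
    qed
    moreover have "\<sigma> j' mod 2 ^ s = j' div M"
    proof -
      have "\<sigma> j' mod 2 ^ s = (j' div M + j' * n) mod 2 ^ s"
        unfolding \<sigma>_def using dv by (simp add: mod_mod_cancel)
      also have "j' * n = (j' * t) * 2 ^ s" using nt by simp
      also have "(j' div M + (j' * t) * 2 ^ s) mod 2 ^ s = (j' div M) mod 2 ^ s" by (rule mod_mult_self1)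
      also have "\<dots> = j' div M" using a by simp
      finally show ?thesis .
    qed
    ultimately have dq: "j div M = j' div M" using e by simp
    have "[j div M + j * n = j div M + j' * n] (mod N)"
      using e dq unfolding \<sigma>_def cong_def by simp
    then have "[j * n = j' * n] (mod N)" by (simp only: cong_add_lcancel_nat)
    then have "(j * n) mod N = (j' * n) mod N" by (simp only: cong_def)
    moreover have "2 ^ s * ((j * t) mod M) = (j * n) mod N" if "True" for j :: nat
    proof -
      have "2 ^ s * ((j * t) mod M) = (2 ^ s * (j * t)) mod (2 ^ s * M)" by (rule mult_mod_right)
      also have "2 ^ s * (j * t) = j * n" using nt by simp
      also have "2 ^ s * M = N" using NM by simp
      finally show ?thesis .
    qed
    ultimately have "2 ^ s * ((j * t) mod M) = 2 ^ s * ((j' * t) mod M)" by metis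
    then have "[j * t = j' * t] (mod M)" unfolding cong_def by simp
    moreover have "coprime t M" unfolding M_def using ot by simp
    ultimately have "[j = j'] (mod M)" by (simp add: cong_mult_rcancel_nat)
    then have "j mod M = j' mod M" by (simp add: cong_def)
    then show "j = j'" using dq by (metis div_mult_mod_eq)
  qed
  have \<sigma>surj: "\<sigma> ` {..<N} = {..<N}"
    by (rule endo_inj_surj) (auto simp: \<sigma>inj \<sigma>_def Npos)
  have cwimg: "cw n ` {..<N} = {w. length w = n}"
  proof
    show "cw n ` {..<N} \<subseteq> {w. length w = n}" by (auto simp: cw_def)
    show "{w. length w = n} \<subseteq> cw n ` {..<N}"
    proof
      fix v :: "bool list" assume "v \<in> {w. length w = n}"
      then obtain p where "p < 2 ^ n" "cw n p = v" using db_facts(2)[OF n1, of v] by auto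
      then show "v \<in> cw n ` {..<N}" unfolding N_def by auto
    qed
  qed
  have cwinj: "inj_on (cw n) {..<N}"
  proof (rule eq_card_imp_inj_on)
    have "card (cw n ` {..<N}) = 2 ^ n" unfolding cwimg by (rule card_words)
    then show "card (cw n ` {..<N}) = card {..<N}" using N_def by simp
  qed simp
  obtain p where p: "p < N" "cw n p = w" using db_facts(2)[OF n1 lw] N_def by auto
  obtain j0 where j0: "j0 < N" "\<sigma> j0 = p" using \<sigma>surj p by (metis imageE lessThan_iff)
  have J: "{j. j < N \<and> cw n (\<sigma> j) = w} = {j0}"
  proof
    show "{j. j < N \<and> cw n (\<sigma> j) = w} \<subseteq> {j0}"
    proof
      fix j assume "j \<in> {j. j < N \<and> cw n (\<sigma> j) = w}"
      then have jj: "j < N" "cw n (\<sigma> j) = w" by auto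
      have "\<sigma> j < N" unfolding \<sigma>_def using Npos by simp
      then have "\<sigma> j = p" using cwinj p jj by (auto dest: inj_onD)
      then show "j \<in> {j0}" using \<sigma>inj j0 jj by (auto dest: inj_onD)
    qed
    show "{j0} \<subseteq> {j. j < N \<and> cw n (\<sigma> j) = w}" using j0 p by auto
  qed
  have A: "{i. i + length w \<le> length (S n) \<and> take (length w) (drop i (S n)) = w \<and> i mod length w = 0}
      = (\<lambda>j. j * n) ` {j. j < N \<and> cw n (\<sigma> j) = w}"
  proof (rule set_eqI, rule iffI)
    fix i assume "i \<in> {i. i + length w \<le> length (S n) \<and> take (length w) (drop i (S n)) = w \<and> i mod length w = 0}"
    then have i: "i + length w \<le> length (S n)" "take (length w) (drop i (S n)) = w" "i mod length w = 0" by auto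
    have ie: "i = (i div n) * n" using i(3) lw by (metis div_mult_mod_eq add_0_right)
    have "i div n < N"
    proof -
      have "(i div n) * n + n \<le> N * n" using i(1) ie lw lS by (simp add: mult.commute)
      then have "(Suc (i div n)) * n \<le> N * n" by simp
      then have "Suc (i div n) \<le> N" using mult_le_cancel2[of "Suc (i div n)" n N] n1 by auto
      then show ?thesis by simp
    qed
    moreover have "cw n (\<sigma> (i div n)) = w" using blk[OF \<open>i div n < N\<close>] i(2) ie lw by simp
    ultimately show "i \<in> (\<lambda>j. j * n) ` {j. j < N \<and> cw n (\<sigma> j) = w}" using ie by blast
  next
    fix i assume "i \<in> (\<lambda>j. j * n) ` {j. j < N \<and> cw n (\<sigma> j) = w}"
    then obtain j where j: "j < N" "cw n (\<sigma> j) = w" "i = j * n" by auto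
    have "j * n + length w \<le> length (S n)" using j lw lS
      by (metis Suc_leI add.commute mult.commute mult_Suc_right mult_le_mono2)
    moreover have "take (length w) (drop (j * n) (S n)) = w" using blk[OF j(1)] j lw by simp
    moreover have "j * n mod length w = 0" using lw by simp
    ultimately show "i \<in> {i. i + length w \<le> length (S n) \<and> take (length w) (drop i (S n)) = w \<and> i mod length w = 0}"
      using j(3) by simp
  qed
  have "occ_b w (S n) = card ((\<lambda>j. j * n) ` {j0})" unfolding occ_b_def A J ..
  then show ?thesis by simp
qed

end
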